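(* Let $n\ge1$, $0\le k\le n$, $D^\star\in(0,1)$, $\varepsilon\in(0,D^\star)$ and $\rho=\varepsilon(D^\star-\varepsilon)/(2n)$. Consider the set $\mathcal F_k$ of $\lambda\in\mathcal L_n$ such that, with $t=t_{\mathrm{wf}}(\lambda,D^\star)$, we have $\lambda_i\ge t+\rho$ for all $i\le k$ and $0\le\lambda_i\le t-\rho$ for all $i>k$. Then every maximizer $\lambda^\star$ of $G(\lambda)=\mathbf R_{\mathrm{rc}}(\lambda,D^\star)-\mathbf R_{\mathrm{wf}}(\lambda,D^\star)$ over $\mathcal F_k$ has at most $5$ distinct coordinate values, i.e. $|\{\lambda^\star_1,\dots,\lambda^\star_n\}|\le5$.
   Context: Logarithms are base 2. $\mathcal L_n=\{\lambda\in\mathbb R^n_{\ge0}:\sum_i\lambda_i=n\}$. For $\lambda\in\mathcal L_n$ and $T,t>0$: $D_{\mathrm{rc}}(\lambda,T)=\frac1n\sum_i\frac{\lambda_i}{1+\lambda_iT}$, $R_{\mathrm{rc}}(\lambda,T)=\frac1{2n}\sum_i\log(1+\lambda_iT)$, $D_{\mathrm{wf}}(\lambda,t)=\frac1n\sum_i\min\{\lambda_i,t\}$, $R_{\mathrm{wf}}(\lambda,t)=\frac1{2n}\sum_i\max\{0,\log(\lambda_i/t)\}$. For $D\in(0,1)$, $T_{\mathrm{rc}}(\lambda,D)$ is the unique $T>0$ with $D_{\mathrm{rc}}(\lambda,T)=D$, and $t_{\mathrm{wf}}(\lambda,D)$ is the unique $t\in(0,\max_i\lambda_i)$ with $D_{\mathrm{wf}}(\lambda,t)=D$.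 Set $\mathbf R_{\mathrm{rc}}(\lambda,D)=R_{\mathrm{rc}}(\lambda,T_{\mathrm{rc}}(\lambda,D))$ and $\mathbf R_{\mathrm{wf}}(\lambda,D)=R_{\mathrm{wf}}(\lambda,t_{\mathrm{wf}}(\lambda,D))$. *)

theory Defs
  imports Complex_Main
begin

text \<open>Vectors lambda in R^n are represented as functions nat => real, with
 coordinates indexed by 1..n (values outside 1..n are irrelevant).
 Logarithms are base 2.\<close>

definition Lset :: "nat \<Rightarrow> (nat \<Rightarrow> real) set" where
  "Lset n = {lam. (\<forall>i\<in>{1..n}. 0 \<le> lam i) \<and> (\<Sum>i=1..n. lam i) = real n}"

definition D_rc :: "nat \<Rightarrow> (nat \<Rightarrow> real) \<Rightarrow> real \<Rightarrow> real" where
  "D_rc n lam T = (1 / real n) * (\<Sum>i=1..n. lam i / (1 + lam i * T))"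

definition R_rc :: "nat \<Rightarrow> (nat \<Rightarrow> real) \<Rightarrow> real \<Rightarrow> real" where
  "R_rc n lam T = (1 / (2 * real n)) * (\<Sum>i=1..n. log 2 (1 + lam i * T))"

definition D_wf :: "nat \<Rightarrow> (nat \<Rightarrow> real) \<Rightarrow> real \<Rightarrow> real" where
  "D_wf n lam t = (1 / real n) * (\<Sum>i=1..n. min (lam i) t)"

definition R_wf :: "nat \<Rightarrow> (nat \<Rightarrow> real) \<Rightarrow> real \<Rightarrow> real" where
  "R_wf n lam t = (1 / (2 * real n)) * (\<Sum>i=1..n. max 0 (log 2 (lam i / t)))"

definition T_rc :: "nat \<Rightarrow> (nat \<Rightarrow> real) \<Rightarrow> real \<Rightarrow> real" where
  "T_rc n lam D = (THE T. T > 0 \<and> D_rc n lam T = D)"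

definition t_wf :: "nat \<Rightarrow> (nat \<Rightarrow> real) \<Rightarrow> real \<Rightarrow> real" where
  "t_wf n lam D = (THE t. 0 < t \<and> t < Max (lam ` {1..n}) \<and> D_wf n lam t = D)"

definition RR_rc :: "nat \<Rightarrow> (nat \<Rightarrow> real) \<Rightarrow> real \<Rightarrow> real" where
  "RR_rc n lam D = R_rc n lam (T_rc n lam D)"

definition RR_wf :: "nat \<Rightarrow> (nat \<Rightarrow> real) \<Rightarrow> real \<Rightarrow> real" where
  "RR_wf n lam D = R_wf n lam (t_wf n lam D)"

definition Gap :: "nat \<Rightarrow> real \<Rightarrow> (nat \<Rightarrow> real) \<Rightarrow> real" where
  "Gap n D lam = RR_rc n lam D - RR_wf n lam D"

definition Fset :: "nat \<Rightarrow> nat \<Rightarrow> real \<Rightarrow> real \<Rightarrow> (nat \<Rightarrow> real) set" where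
  "Fset n k D rho = {lam. lam \<in> Lset n \<and>
     (let t = t_wf n lam D in
        (\<forall>i\<in>{1..k}. t + rho \<le> lam i) \<and>
        (\<forall>i\<in>{k+1..n}. 0 \<le> lam i \<and> lam i \<le> t - rho))}"

end

theory Submission
  imports Defs
begin


lemma Max_attained:
  fixes n :: nat and lam :: "nat \<Rightarrow> real"
  assumes "1 \<le> n"
  shows "\<exists>i\<in>{1..n}. lam i = Max (lam ` {1..n})" and "\<forall>i\<in>{1..n}. lam i \<le> Max (lam ` {1..n})"
proof -
  have ne: "lam ` {1..n} \<noteq> {}" proof -
    have "1 \<in> {1..n}" using assms by simp
    then show ?thesis by blast
  qed
  have "Max (lam ` {1..n}) \<in> lam ` {1..n}" using Max_in[OF _ ne] by simp
  then show "\<exists>i\<in>{1..n}. lam i = Max (lam ` {1..n})" by auto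
  show "\<forall>i\<in>{1..n}. lam i \<le> Max (lam ` {1..n})" by auto
qed

lemma Dwf_strict:
  assumes L: "lam \<in> Lset n" and n: "1 \<le> n" and lt: "t1 < t2" and tm: "t1 < Max (lam ` {1..n})"
  shows "D_wf n lam t1 < D_wf n lam t2"
proof -
  obtain j where j: "j \<in> {1..n}" "lam j = Max (lam ` {1..n})" using Max_attained[OF n] by blast
  have "(\<Sum>i=1..n. min (lam i) t1) < (\<Sum>i=1..n. min (lam i) t2)"
  proof (rule sum_strict_mono_ex1)
    show "\<forall>x\<in>{1..n}. min (lam x) t1 \<le> min (lam x) t2" using lt by auto
    show "\<exists>a\<in>{1..n}. min (lam a) t1 < min (lam a) t2" using j lt tm by (intro bexI[of _ j]) auto
  qed auto
  then show ?thesis unfolding D_wf_def using n by (simp add: divide_strict_right_mono)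
qed

lemma twf_eq:
  assumes L: "lam \<in> Lset n" and n: "1 \<le> n" and t: "0 < t" "t < Max (lam ` {1..n})" "D_wf n lam t = D"
  shows "t_wf n lam D = t"
  unfolding t_wf_def
proof (rule the_equality)
  show "0 < t \<and> t < Max (lam ` {1..n}) \<and> D_wf n lam t = D" using t by auto
  fix t' assume h: "0 < t' \<and> t' < Max (lam ` {1..n}) \<and> D_wf n lam t' = D"
  show "t' = t"
  proof (rule ccontr)
    assume "t' \<noteq> t"
    then consider "t' < t" | "t < t'" by linarith
    then show False
    proof cases
      case 1 then show False using Dwf_strict[OF L n 1] h t by auto
    next
      case 2 then show False using Dwf_strict[OF L n 2] h t by auto
    qed
  qed
qed

lemma twf_props:
  assumes L: "lam \<in> Lset n" and n: "1 \<le> n" and D: "0 < D" "D < 1"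
  shows "0 < t_wf n lam D \<and> t_wf n lam D < Max (lam ` {1..n}) \<and> D_wf n lam (t_wf n lam D) = D"
proof -
  define M where "M = Max (lam ` {1..n})"
  have nn: "\<forall>i\<in>{1..n}. 0 \<le> lam i" and s: "(\<Sum>i=1..n. lam i) = real n" using L unfolding Lset_def by auto
  have le: "\<forall>i\<in>{1..n}. lam i \<le> M" using Max_attained(2)[OF n] unfolding M_def by auto
  have M0: "0 \<le> M" using nn le n by force
  have f0: "D_wf n lam 0 = 0"
  proof -
    have "(\<Sum>i=1..n. min (lam i) 0) = (\<Sum>i=1..n. (0::real))" using nn by (intro sum.cong) auto
    then show ?thesis unfolding D_wf_def by simp
  qed
  have fM: "D_wf n lam M = 1"
  proof -
    have "(\<Sum>i=1..n. min (lam i) M) = (\<Sum>i=1..n. lam i)" using le by (intro sum.cong) auto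
    then show ?thesis unfolding D_wf_def using s n by simp
  qed
  have cont: "continuous_on {0..M} (D_wf n lam)" unfolding D_wf_def by (intro continuous_intros)
  obtain x where x: "0 \<le> x" "x \<le> M" "D_wf n lam x = D"
    using IVT'[of "D_wf n lam" 0 D M, OF _ _ M0 cont] f0 fM D by auto
  have "x \<noteq> 0" using x f0 D by auto
  moreover have "x \<noteq> M" using x fM D by auto
  ultimately have xx: "0 < x" "x < M" using x by auto
  have "t_wf n lam D = x" using twf_eq[OF L n xx(1) xx(2)[unfolded M_def] x(3)] .
  then show ?thesis using xx x unfolding M_def by auto
qed

lemma pos_exists:
  assumes L: "lam \<in> Lset n" and n: "1 \<le> n"
  shows "\<exists>i\<in>{1..n}. 0 < lam i"
proof (rule ccontr)
  assume "\<not> ?thesis"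
  then have "\<forall>i\<in>{1..n}. lam i = 0" using L unfolding Lset_def by force
  then have "(\<Sum>i=1..n. lam i) = 0" by simp
  then show False using L n unfolding Lset_def by auto
qed

lemma Drc_strict:
  assumes L: "lam \<in> Lset n" and n: "1 \<le> n" and T: "0 \<le> T1" "T1 < T2"
  shows "D_rc n lam T2 < D_rc n lam T1"
proof -
  have nn: "\<forall>i\<in>{1..n}. 0 \<le> lam i" using L unfolding Lset_def by auto
  obtain j where j: "j \<in> {1..n}" "0 < lam j" using pos_exists[OF L n] by blast
  have "(\<Sum>i=1..n. lam i / (1 + lam i * T2)) < (\<Sum>i=1..n. lam i / (1 + lam i * T1))"
  proof (rule sum_strict_mono_ex1)
    show "\<forall>x\<in>{1..n}. lam x / (1 + lam x * T2) \<le> lam x / (1 + lam x * T1)"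
    proof
      fix x assume "x \<in> {1..n}"
      then have "0 \<le> lam x" using nn by auto
      moreover have "lam x * T1 \<le> lam x * T2" using T \<open>0 \<le> lam x\<close> by (intro mult_left_mono) auto
      ultimately show "lam x / (1 + lam x * T2) \<le> lam x / (1 + lam x * T1)"
        using T by (intro divide_left_mono) (auto intro!: mult_pos_pos add_pos_nonneg)
    qed
    have "lam j * T1 < lam j * T2" using T j by auto
    then have "lam j / (1 + lam j * T2) < lam j / (1 + lam j * T1)"
      using T j by (intro divide_strict_left_mono) (auto intro!: mult_pos_pos add_pos_nonneg)
    then show "\<exists>a\<in>{1..n}. lam a / (1 + lam a * T2) < lam a / (1 + lam a * T1)" using j by auto
  qed auto
  then show ?thesis unfolding D_rc_def using n by (simp add: divide_strict_right_mono)
qed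

lemma Trc_props:
  assumes L: "lam \<in> Lset n" and n: "1 \<le> n" and D: "0 < D" "D < 1"
  shows "0 < T_rc n lam D \<and> D_rc n lam (T_rc n lam D) = D"
proof -
  have nn: "\<forall>i\<in>{1..n}. 0 \<le> lam i" and s: "(\<Sum>i=1..n. lam i) = real n" using L unfolding Lset_def by auto
  define B where "B = 2 / D"
  have B0: "0 < B" using D unfolding B_def by auto
  have f0: "D_rc n lam 0 = 1" unfolding D_rc_def using s n by simp
  have fB: "D_rc n lam B \<le> D / 2"
  proof -
    have "(\<Sum>i=1..n. lam i / (1 + lam i * B)) \<le> (\<Sum>i=1..n. 1 / B)"
    proof (rule sum_mono)
      fix i assume "i \<in> {1..n}"
      then have "0 \<le> lam i" using nn by auto
      then show "lam i / (1 + lam i * B) \<le> 1 / B" using B0 by (simp add: field_simps add_pos_nonneg)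
    qed
    then have "(\<Sum>i=1..n. lam i / (1 + lam i * B)) \<le> real n / B" by simp
    then have "D_rc n lam B \<le> (1 / real n) * (real n / B)" unfolding D_rc_def using n
      by (intro mult_left_mono) auto
    also have "\<dots> = D / 2" using n D unfolding B_def by simp
    finally show ?thesis .
  qed
  have nz: "\<forall>x\<in>{0..B}. \<forall>i\<in>{1..n}. 1 + lam i * x \<noteq> 0"
  proof (intro ballI)
    fix x i assume "x \<in> {0..B}" "i \<in> {1..n}"
    then have "0 \<le> lam i * x" using nn by auto
    then show "1 + lam i * x \<noteq> 0" by linarith
  qed
  have cont: "continuous_on {0..B} (D_rc n lam)" unfolding D_rc_def
    apply (intro continuous_intros) using nz by auto
  obtain x where x: "0 \<le> x" "x \<le> B" "D_rc n lam x = D"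
    using IVT2'[of "D_rc n lam" B D 0, OF _ _ _ cont] f0 fB D B0 by auto
  have x0: "0 < x" using x f0 D by (cases "x = 0") auto
  have "T_rc n lam D = x" unfolding T_rc_def
  proof (rule the_equality)
    show "0 < x \<and> D_rc n lam x = D" using x0 x by auto
    fix y assume y: "0 < y \<and> D_rc n lam y = D"
    show "y = x"
    proof (rule ccontr)
      assume "y \<noteq> x"
      then consider "y < x" | "x < y" by linarith
      then show False
      proof cases
        case 1 then show False using Drc_strict[OF L n _ 1] y x by auto
      next
        case 2 then show False using Drc_strict[OF L n _ 2] y x by auto
      qed
    qed
  qed
  then show ?thesis using x0 x by auto
qed

lemma Trc_ge:
  assumes L: "lam \<in> Lset n" and n: "1 \<le> n" and D: "0 < D" "D < 1" and T: "0 < T" "D \<le> D_rc n lam T"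
  shows "T \<le> T_rc n lam D"
proof (rule ccontr)
  assume "\<not> T \<le> T_rc n lam D"
  then have "T_rc n lam D < T" by auto
  then have "D_rc n lam T < D_rc n lam (T_rc n lam D)" using Drc_strict[OF L n, of "T_rc n lam D" T] Trc_props[OF L n D] by auto
  then show False using Trc_props[OF L n D] T by auto
qed

lemma Rrc_mono:
  assumes L: "lam \<in> Lset n" and T: "0 < T1" "T1 \<le> T2"
  shows "R_rc n lam T1 \<le> R_rc n lam T2"
proof -
  have nn: "\<forall>i\<in>{1..n}. 0 \<le> lam i" using L unfolding Lset_def by auto
  have "(\<Sum>i=1..n. log 2 (1 + lam i * T1)) \<le> (\<Sum>i=1..n. log 2 (1 + lam i * T2))"
  proof (rule sum_mono)
    fix i assume "i \<in> {1..n}"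
    then have "0 \<le> lam i" using nn by auto
    moreover have "lam i * T1 \<le> lam i * T2" using T \<open>0 \<le> lam i\<close> by (intro mult_left_mono) auto
    ultimately show "log 2 (1 + lam i * T1) \<le> log 2 (1 + lam i * T2)" using T
      by (subst log_le_cancel_iff) (auto intro: add_pos_nonneg)
  qed
  then show ?thesis unfolding R_rc_def by (intro mult_left_mono) auto
qed

lemma Gap_ge:
  assumes L: "lam \<in> Lset n" and n: "1 \<le> n" and D: "0 < D" "D < 1" and T: "0 < T" "D \<le> D_rc n lam T"
    and t: "t_wf n lam D = t"
  shows "R_rc n lam T - R_wf n lam t \<le> Gap n D lam"
proof -
  have "R_rc n lam T \<le> R_rc n lam (T_rc n lam D)" using Rrc_mono[OF L T(1) Trc_ge[OF L n D T]] .
  then show ?thesis unfolding Gap_def RR_rc_def RR_wf_def t by simp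
qed



lemma split_sum:
  fixes f :: "nat \<Rightarrow> real"
  assumes "k \<le> n"
  shows "sum f {1..n} = sum f {1..k} + sum f {Suc k..n}"
proof -
  have "{1..n} = {1..k} \<union> {Suc k..n}" using assms by auto
  moreover have "{1..k} \<inter> {Suc k..n} = {}" by auto
  ultimately show ?thesis by (simp add: sum.union_disjoint)
qed

lemma Dwf_split:
  assumes k: "k \<le> n" and A: "\<forall>i\<in>{1..k}. t \<le> lam i" and B: "\<forall>i\<in>{Suc k..n}. lam i \<le> t"
  shows "D_wf n lam t = (1 / real n) * (real k * t + (\<Sum>i=Suc k..n. lam i))"
proof -
  have "(\<Sum>i=1..n. min (lam i) t) = (\<Sum>i=1..k. min (lam i) t) + (\<Sum>i=Suc k..n. min (lam i) t)"
    using split_sum[OF k] .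
  also have "(\<Sum>i=1..k. min (lam i) t) = (\<Sum>i=1..k. t)" using A by (intro sum.cong) auto
  also have "(\<Sum>i=Suc k..n. min (lam i) t) = (\<Sum>i=Suc k..n. lam i)" using B by (intro sum.cong) auto
  finally show ?thesis unfolding D_wf_def by simp
qed

lemma Fset_intro:
  assumes L: "lam \<in> Lset n" and k: "1 \<le> k" "k \<le> n" and rho: "0 < rho" and t: "0 < t"
    and A: "\<forall>i\<in>{1..k}. t + rho \<le> lam i" and B: "\<forall>i\<in>{Suc k..n}. 0 \<le> lam i \<and> lam i \<le> t - rho"
    and Dw: "D_wf n lam t = D"
  shows "lam \<in> Fset n k D rho \<and> t_wf n lam D = t"
proof -
  have n: "1 \<le> n" using k by auto
  have "lam 1 \<le> Max (lam ` {1..n})" using Max_attained(2)[OF n, of lam] n by auto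
  moreover have "t + rho \<le> lam 1" using A k by auto
  ultimately have "t < Max (lam ` {1..n})" using rho by linarith
  then have tw: "t_wf n lam D = t" using twf_eq[OF L n t] Dw by auto
  have "lam \<in> Fset n k D rho" unfolding Fset_def Let_def using L A B by (auto simp: tw)
  then show ?thesis using tw by auto
qed

lemma sum_upd1:
  fixes h :: "real \<Rightarrow> real"
  assumes "finite S" "i \<in> S"
  shows "(\<Sum>x\<in>S. h ((f(i:=a)) x)) = (\<Sum>x\<in>S. h (f x)) - h (f i) + h a"
proof -
  have "(\<Sum>x\<in>S. h ((f(i:=a)) x)) = h a + (\<Sum>x\<in>S-{i}. h ((f(i:=a)) x))"
    using sum.remove[OF assms, of "\<lambda>x. h ((f(i:=a)) x)"] by simp
  also have "(\<Sum>x\<in>S-{i}. h ((f(i:=a)) x)) = (\<Sum>x\<in>S-{i}. h (f x))" by (intro sum.cong) auto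
  also have "\<dots> = (\<Sum>x\<in>S. h (f x)) - h (f i)"
    using sum.remove[OF assms, of "\<lambda>x. h (f x)"] by simp
  finally show ?thesis by simp
qed

lemma sum_upd2:
  fixes h :: "real \<Rightarrow> real"
  assumes "finite S" "i \<in> S" "j \<in> S" "i \<noteq> j"
  shows "(\<Sum>x\<in>S. h ((f(i:=a, j:=b)) x)) = (\<Sum>x\<in>S. h (f x)) - h (f i) - h (f j) + h a + h b"
proof -
  have "(\<Sum>x\<in>S. h ((f(i:=a, j:=b)) x)) = (\<Sum>x\<in>S. h ((f(i:=a)) x)) - h ((f(i:=a)) j) + h b"
    using sum_upd1[OF assms(1,3), of h "f(i:=a)" b] by simp
  also have "\<dots> = (\<Sum>x\<in>S. h (f x)) - h (f i) + h a - h (f j) + h b"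
    using sum_upd1[OF assms(1,2), of h f a] assms(4) by simp
  finally show ?thesis by simp
qed

lemma w_concave:
  fixes a b T :: real
  assumes "0 \<le> a" "0 \<le> b" "0 \<le> T"
  shows "a / (1 + a * T) + b / (1 + b * T) \<le> 2 * (((a+b)/2) / (1 + (a+b)/2 * T))"
proof -
  have p: "0 < 1 + a*T" "0 < 1 + b*T" "0 < 2 + (a+b)*T" using assms by (auto intro!: add_pos_nonneg)
  have "2 * (((a+b)/2) / (1 + (a+b)/2 * T)) = 2*(a+b) / (2 + (a+b)*T)" using p by (simp add: field_simps)
  moreover have "a / (1 + a * T) + b / (1 + b * T) \<le> 2*(a+b) / (2 + (a+b)*T)"
  proof -
    have "(a*(1+b*T) + b*(1+a*T)) * (2 + (a+b)*T) \<le> 2*(a+b) * ((1+a*T)*(1+b*T))"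
    proof -
      have "2*(a+b) * ((1+a*T)*(1+b*T)) - (a*(1+b*T) + b*(1+a*T)) * (2 + (a+b)*T) = T*(a-b)^2"
        by (simp add: algebra_simps power2_eq_square)
      moreover have "0 \<le> T*(a-b)^2" using assms by simp
      ultimately show ?thesis by linarith
    qed
    moreover have "a / (1 + a * T) + b / (1 + b * T) = (a*(1+b*T) + b*(1+a*T)) / ((1+a*T)*(1+b*T))"
      using p by (simp add: field_simps)
    moreover have "0 < (1+a*T)*(1+b*T)" using p by simp
    ultimately show ?thesis using p(3) by (simp add: divide_le_eq le_divide_eq mult.commute)
  qed
  ultimately show ?thesis by simp
qed

lemma log_concave_strict:
  fixes a b T :: real
  assumes "0 \<le> a" "0 \<le> b" "0 < T" "a \<noteq> b"
  shows "log 2 (1 + a * T) + log 2 (1 + b * T) < 2 * log 2 (1 + (a+b)/2 * T)"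
proof -
  have p: "0 < 1 + a*T" "0 < 1 + b*T" "0 < 1 + (a+b)/2*T" using assms by (auto intro!: add_pos_nonneg)
  have "(1 + a*T) * (1 + b*T) < (1 + (a+b)/2*T) * (1 + (a+b)/2*T)"
  proof -
    have "(1 + (a+b)/2*T) * (1 + (a+b)/2*T) - (1 + a*T) * (1 + b*T) = ((a-b)*T/2)^2"
      by (simp add: algebra_simps power2_eq_square)
    moreover have "0 < ((a-b)*T/2)^2" using assms by simp
    ultimately show ?thesis by linarith
  qed
  then have "log 2 ((1 + a*T) * (1 + b*T)) < log 2 ((1 + (a+b)/2*T) * (1 + (a+b)/2*T))"
    using p by (subst log_less_cancel_iff) auto
  then show ?thesis using p by (simp add: log_mult)
qed

lemma max_log_zero:
  fixes x t :: real
  assumes "0 \<le> x" "x \<le> t" "0 < t"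
  shows "max 0 (log 2 (x / t)) = 0"
proof (cases "x = 0")
  case True then show ?thesis by (simp add: log_def)
next
  case False
  then have "0 < x / t" using assms by auto
  moreover have "x / t \<le> 1" using assms by auto
  ultimately have "log 2 (x / t) \<le> log 2 1" by (subst log_le_cancel_iff) auto
  then show ?thesis by simp
qed

lemma struct_val:
  assumes k: "k \<le> n" and t: "0 < t" and T: "0 < T"
    and A: "\<forall>i\<in>{1..k}. t < lam i" and B: "\<forall>i\<in>{Suc k..n}. 0 \<le> lam i \<and> lam i \<le> t"
  shows "R_rc n lam T - R_wf n lam t = (1 / (2 * real n)) *
     (((\<Sum>i=1..k. ln (1 + lam i * T) - ln (lam i)) + real k * ln t) / ln 2
      + (\<Sum>i=Suc k..n. log 2 (1 + lam i * T)))"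
proof -
  have "R_rc n lam T - R_wf n lam t = (1 / (2 * real n)) * (\<Sum>i=1..n. log 2 (1 + lam i * T) - max 0 (log 2 (lam i / t)))"
    unfolding R_rc_def R_wf_def by (simp add: sum_subtractf algebra_simps)
  also have "(\<Sum>i=1..n. log 2 (1 + lam i * T) - max 0 (log 2 (lam i / t)))
     = (\<Sum>i=1..k. log 2 (1 + lam i * T) - max 0 (log 2 (lam i / t))) + (\<Sum>i=Suc k..n. log 2 (1 + lam i * T) - max 0 (log 2 (lam i / t)))"
    using split_sum[OF k] .
  also have "(\<Sum>i=1..k. log 2 (1 + lam i * T) - max 0 (log 2 (lam i / t))) = (\<Sum>i=1..k. (ln (1 + lam i * T) - ln (lam i) + ln t) / ln 2)"
  proof (intro sum.cong refl)
    fix i assume i: "i \<in> {1..k}"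
    then have li: "t < lam i" using A by auto
    then have "0 < lam i" using t by linarith
    have "1 < lam i / t" using li t by auto
    then have "0 < log 2 (lam i / t)" by simp
    then have "max 0 (log 2 (lam i / t)) = log 2 (lam i / t)" by simp
    moreover have "log 2 (lam i / t) = (ln (lam i) - ln t) / ln 2" using \<open>0 < lam i\<close> t by (simp add: log_def ln_div)
    moreover have "log 2 (1 + lam i * T) = ln (1 + lam i * T) / ln 2" by (simp add: log_def)
    ultimately show "log 2 (1 + lam i * T) - max 0 (log 2 (lam i / t)) = (ln (1 + lam i * T) - ln (lam i) + ln t) / ln 2"
      by (simp add: diff_divide_distrib add_divide_distrib)
  qed
  also have "(\<Sum>i=1..k. (ln (1 + lam i * T) - ln (lam i) + ln t) / ln 2) = ((\<Sum>i=1..k. ln (1 + lam i * T) - ln (lam i)) + real k * ln t) / ln 2"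
    by (simp add: sum_divide_distrib[symmetric] sum.distrib)
  also have "(\<Sum>i=Suc k..n. log 2 (1 + lam i * T) - max 0 (log 2 (lam i / t))) = (\<Sum>i=Suc k..n. log 2 (1 + lam i * T))"
    using B t by (intro sum.cong refl) (simp add: max_log_zero)
  finally show ?thesis .
qed


lemma alg_poly:
  fixes a b c d :: real
  assumes v1_def: "v1 = (b-c)*(b-d)*(c-d)*(a-d-1)"
    and v2_def: "v2 = -(a-c)*(a-d)*(c-d)*(b-d-1)"
    and v3_def: "v3 = (a-b)*(a-d)*(b-d)*(c-d-1)"
    and v4_def: "v4 = (a-b)*(a-c)*(b-c)"
    and K_def: "K = (a-b)*(a-c)*(a-d)*(b-c)*(b-d)*(c-d)"
  shows "v1+v2+v3+v4 = 0"
    and "v1*a^2+v2*b^2+v3*c^2+v4*d^2 = K"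
    and "v1*a^2*((1-b)*(1-c)*(1-d))+v2*b^2*((1-a)*(1-c)*(1-d))+v3*c^2*((1-a)*(1-b)*(1-d))+v4*d^2*((1-a)*(1-b)*(1-c)) = - K*d"
  unfolding v1_def v2_def v3_def v4_def K_def by algebra+

lemma alg:
  fixes a b c d :: real
  assumes "a \<noteq> b" "a \<noteq> c" "a \<noteq> d" "b \<noteq> c" "b \<noteq> d" "c \<noteq> d"
    and "a < 1" "b < 1" "c < 1" "d < 1" "0 < d"
  shows "\<exists>v1 v2 v3 v4. v1+v2+v3+v4 = 0 \<and> v1*a^2+v2*b^2+v3*c^2+v4*d^2 > 0 \<and>
     v1*(- (a^2/(1-a)))+v2*(- (b^2/(1-b)))+v3*(- (c^2/(1-c)))+v4*(- (d^2/(1-d))) > 0"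
proof -
  define v1 where "v1 = (b-c)*(b-d)*(c-d)*(a-d-1)"
  define v2 where "v2 = -(a-c)*(a-d)*(c-d)*(b-d-1)"
  define v3 where "v3 = (a-b)*(a-d)*(b-d)*(c-d-1)"
  define v4 where "v4 = (a-b)*(a-c)*(b-c)"
  define K where "K = (a-b)*(a-c)*(a-d)*(b-c)*(b-d)*(c-d)"
  note e = alg_poly[OF v1_def v2_def v3_def v4_def K_def]
  have K0: "K \<noteq> 0" unfolding K_def using assms by auto
  define P where "P = (1-a)*(1-b)*(1-c)*(1-d)"
  have P0: "P > 0" unfolding P_def using assms by auto
  have third: "v1*(- (a^2/(1-a)))+v2*(- (b^2/(1-b)))+v3*(- (c^2/(1-c)))+v4*(- (d^2/(1-d))) = K*d/P"
  proof -
    have "(v1*(- (a^2/(1-a)))+v2*(- (b^2/(1-b)))+v3*(- (c^2/(1-c)))+v4*(- (d^2/(1-d)))) * P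
       = - (v1*a^2*((1-b)*(1-c)*(1-d))+v2*b^2*((1-a)*(1-c)*(1-d))+v3*c^2*((1-a)*(1-b)*(1-d))+v4*d^2*((1-a)*(1-b)*(1-c)))"
    proof -
      have a1: "(- (a^2/(1-a))) * P = - (a^2*((1-b)*(1-c)*(1-d)))" unfolding P_def using assms by (simp add: field_simps)
      have b1: "(- (b^2/(1-b))) * P = - (b^2*((1-a)*(1-c)*(1-d)))" unfolding P_def using assms by (simp add: field_simps)
      have c1: "(- (c^2/(1-c))) * P = - (c^2*((1-a)*(1-b)*(1-d)))" unfolding P_def using assms by (simp add: field_simps)
      have d1: "(- (d^2/(1-d))) * P = - (d^2*((1-a)*(1-b)*(1-c)))" unfolding P_def using assms by (simp add: field_simps)
      have "(v1*(- (a^2/(1-a)))+v2*(- (b^2/(1-b)))+v3*(- (c^2/(1-c)))+v4*(- (d^2/(1-d)))) * P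
        = v1*((- (a^2/(1-a))) * P) + v2*((- (b^2/(1-b))) * P) + v3*((- (c^2/(1-c))) * P) + v4*((- (d^2/(1-d))) * P)"
        by (simp add: algebra_simps)
      also have "\<dots> = - (v1*a^2*((1-b)*(1-c)*(1-d))+v2*b^2*((1-a)*(1-c)*(1-d))+v3*c^2*((1-a)*(1-b)*(1-d))+v4*d^2*((1-a)*(1-b)*(1-c)))" unfolding a1 b1 c1 d1 by algebra
      finally show ?thesis .
    qed
    then have "(v1*(- (a^2/(1-a)))+v2*(- (b^2/(1-b)))+v3*(- (c^2/(1-c)))+v4*(- (d^2/(1-d)))) * P = K*d" using e(3) by linarith
    then show ?thesis using P0 by (simp add: eq_divide_eq)
  qed
  show ?thesis
  proof (cases "K > 0")
    case True
    then show ?thesis using e third P0 assms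
      by (intro exI[of _ v1] exI[of _ v2] exI[of _ v3] exI[of _ v4]) auto
  next
    case False
    then have "K < 0" using K0 by auto
    then show ?thesis using e third P0 assms
      by (intro exI[of _ "-v1"] exI[of _ "-v2"] exI[of _ "-v3"] exI[of _ "-v4"])
        (auto simp: algebra_simps divide_neg_pos mult_neg_pos)
  qed
qed

lemma card_ge4:
  assumes "Suc (Suc (Suc (Suc 0))) \<le> card S"
  obtains a1 a2 a3 a4 where "a1 \<in> S" "a2 \<in> S" "a3 \<in> S" "a4 \<in> S"
    "a1 \<noteq> a2" "a1 \<noteq> a3" "a1 \<noteq> a4" "a2 \<noteq> a3" "a2 \<noteq> a4" "a3 \<noteq> a4"
proof -
  obtain a1 S1 where h1: "S = insert a1 S1" "a1 \<notin> S1" "Suc (Suc (Suc 0)) \<le> card S1"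
    using card_le_Suc_iff[THEN iffD1, OF assms] by blast
  obtain a2 S2 where h2: "S1 = insert a2 S2" "a2 \<notin> S2" "Suc (Suc 0) \<le> card S2"
    using card_le_Suc_iff[THEN iffD1, OF h1(3)] by blast
  obtain a3 S3 where h3: "S2 = insert a3 S3" "a3 \<notin> S3" "Suc 0 \<le> card S3"
    using card_le_Suc_iff[THEN iffD1, OF h2(3)] by blast
  obtain a4 S4 where h4: "S3 = insert a4 S4" "a4 \<notin> S4"
    using card_le_Suc_iff[THEN iffD1, OF h3(3)] by blast
  show ?thesis
  proof (rule that)
    show "a1 \<in> S" "a2 \<in> S" "a3 \<in> S" "a4 \<in> S" using h1 h2 h3 h4 by auto
    show "a1 \<noteq> a2" "a1 \<noteq> a3" "a1 \<noteq> a4" using h1 h2 h3 h4 by auto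
    show "a2 \<noteq> a3" "a2 \<noteq> a4" using h2 h3 h4 by auto
    show "a3 \<noteq> a4" using h3 h4 by auto
  qed
qed


lemma perturb_A:
  fixes L :: "nat \<Rightarrow> real"
  assumes L: "L \<in> Lset n" and k: "1 \<le> k" "k \<le> n" and rho: "0 < rho" and t: "0 < t" and T: "0 < T"
    and FA: "\<forall>i\<in>{1..k}. t + rho \<le> L i" and FB: "\<forall>i\<in>{Suc k..n}. 0 \<le> L i \<and> L i \<le> t - rho"
    and Dw: "D_wf n L t = D" and Dr: "D_rc n L T = D"
    and I: "i1 \<in> {1..k}" "i2 \<in> {1..k}" "i3 \<in> {1..k}" "i4 \<in> {1..k}"
    and X: "t + rho < L i1" "t + rho < L i2" "t + rho < L i3" "t + rho < L i4"
    and dist: "L i1 \<noteq> L i2" "L i1 \<noteq> L i3" "L i1 \<noteq> L i4" "L i2 \<noteq> L i3" "L i2 \<noteq> L i4" "L i3 \<noteq> L i4"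
  shows "\<exists>L'. L' \<in> Fset n k D rho \<and> t_wf n L' D = t \<and> D \<le> D_rc n L' T \<and>
     R_rc n L T - R_wf n L t < R_rc n L' T - R_wf n L' t"
proof -
  have n: "1 \<le> n" using k by auto
  define u where "u x = 1 / (1 + x * T)" for x :: real
  have upos: "0 < u x \<and> u x < 1" if "0 < x" for x
  proof -
    have "0 < x * T" using that T by simp
    then have "1 < 1 + x * T" by simp
    then show ?thesis unfolding u_def by (simp add: divide_less_eq)
  qed
  have uinj: "x = y" if "0 < x" "0 < y" "u x = u y" for x y
  proof -
    have "1 + x * T = 1 + y * T" using that T unfolding u_def
      by (metis (no_types, lifting) add_pos_pos divide_cancel_left mult_pos_pos zero_less_one zero_neq_one)
    then show ?thesis using T by auto
  qed
  have xpos: "0 < L i1" "0 < L i2" "0 < L i3" "0 < L i4" using X t rho by linarith+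
  have ud: "u (L i1) \<noteq> u (L i2)" "u (L i1) \<noteq> u (L i3)" "u (L i1) \<noteq> u (L i4)"
     "u (L i2) \<noteq> u (L i3)" "u (L i2) \<noteq> u (L i4)" "u (L i3) \<noteq> u (L i4)"
    using uinj xpos dist by metis+
  obtain v1 v2 v3 v4 where v: "v1+v2+v3+v4 = 0"
    "v1*(u (L i1))^2+v2*(u (L i2))^2+v3*(u (L i3))^2+v4*(u (L i4))^2 > 0"
    "v1*(- ((u (L i1))^2/(1-u (L i1))))+v2*(- ((u (L i2))^2/(1-u (L i2))))+v3*(- ((u (L i3))^2/(1-u (L i3))))+v4*(- ((u (L i4))^2/(1-u (L i4)))) > 0"
    using alg[OF ud] upos xpos by blast
  have idist: "i1 \<noteq> i2" "i1 \<noteq> i3" "i1 \<noteq> i4" "i2 \<noteq> i3" "i2 \<noteq> i4" "i3 \<noteq> i4" using dist by auto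
  define V where "V i = (if i = i1 then v1 else 0) + (if i = i2 then v2 else 0) + (if i = i3 then v3 else 0) + (if i = i4 then v4 else 0)" for i
  have Vsum: "(\<Sum>i\<in>S. V i * g i) = v1 * g i1 + v2 * g i2 + v3 * g i3 + v4 * g i4"
    if "finite S" "i1 \<in> S" "i2 \<in> S" "i3 \<in> S" "i4 \<in> S" for S and g :: "nat \<Rightarrow> real"
  proof -
    have "(\<Sum>i\<in>S. V i * g i) = (\<Sum>i\<in>S. (if i = i1 then v1 * g i1 else 0) + (if i = i2 then v2 * g i2 else 0) + (if i = i3 then v3 * g i3 else 0) + (if i = i4 then v4 * g i4 else 0))"
      unfolding V_def by (intro sum.cong refl) (auto simp: algebra_simps)
    also have "\<dots> = v1 * g i1 + v2 * g i2 + v3 * g i3 + v4 * g i4"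
      using that by (simp add: sum.distrib)
    finally show ?thesis .
  qed
  have V0: "V i = 0" if "i \<notin> {i1, i2, i3, i4}" for i using that unfolding V_def by auto
  have Vk: "V i = 0" if "i \<in> {Suc k..n}" for i using that I by (intro V0) auto
  define Vs where "Vs = \<bar>v1\<bar> + \<bar>v2\<bar> + \<bar>v3\<bar> + \<bar>v4\<bar> + 1"
  have Vs0: "0 < Vs" unfolding Vs_def by auto
  have Vb: "\<bar>V i\<bar> \<le> Vs" for i unfolding V_def Vs_def by auto
  define g where "g = min (min (L i1 - t - rho) (L i2 - t - rho)) (min (L i3 - t - rho) (L i4 - t - rho))"
  have g0: "0 < g" unfolding g_def using X by auto
  have gi: "g \<le> L i - t - rho" if "V i \<noteq> 0" for i
  proof -
    have "i \<in> {i1, i2, i3, i4}" using V0 that by blast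
    then show ?thesis unfolding g_def by auto
  qed
  have Lnn: "0 \<le> L i" if "i \<in> {1..n}" for i using L that unfolding Lset_def by auto
  have LA: "0 < L i" if "i \<in> {1..k}" for i using FA that t rho by force
  have In: "i1 \<in> {1..n}" "i2 \<in> {1..n}" "i3 \<in> {1..n}" "i4 \<in> {1..n}" using I k by auto
  define W where "W s = (\<Sum>i=1..n. (L i + s * V i) / (1 + (L i + s * V i) * T))" for s
  have dW: "DERIV W 0 :> (\<Sum>i=1..n. V i * (u (L i))^2)"
    unfolding W_def
  proof (rule DERIV_sum)
    fix i assume i: "i \<in> {1..n}"
    have p: "0 < 1 + L i * T" using Lnn[OF i] T by (simp add: add_pos_nonneg)
    show "((\<lambda>s. (L i + s * V i) / (1 + (L i + s * V i) * T)) has_real_derivative V i * (u (L i))^2) (at 0)"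
      by (rule derivative_eq_intros refl | use p in force)+ (use p in \<open>simp add: u_def field_simps power2_eq_square\<close>)
  qed
  have dWv: "(\<Sum>i=1..n. V i * (u (L i))^2) > 0"
    using Vsum[of "{1..n}" "\<lambda>i. (u (L i))^2", OF _ In] v(2) by simp
  define P where "P s = (\<Sum>i=1..k. ln (1 + (L i + s * V i) * T) - ln (L i + s * V i))" for s
  have dP: "DERIV P 0 :> (\<Sum>i=1..k. V i * (T / (1 + L i * T) - 1 / L i))"
    unfolding P_def
  proof (rule DERIV_sum)
    fix i assume i: "i \<in> {1..k}"
    have p: "0 < 1 + L i * T" "0 < L i" using LA[OF i] T by (simp_all add: add_pos_nonneg)
    show "((\<lambda>s. ln (1 + (L i + s * V i) * T) - ln (L i + s * V i)) has_real_derivative V i * (T / (1 + L i * T) - 1 / L i)) (at 0)"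
      by (rule derivative_eq_intros refl | use p in force)+ (use p in \<open>simp add: field_simps\<close>)
  qed
  have pt: "T / (1 + x * T) - 1 / x = T * (- ((u x)^2 / (1 - u x)))" if "0 < x" for x
  proof -
    have p: "0 < 1 + x * T" using that T by (simp add: add_pos_nonneg)
    have "1 - u x = x * T / (1 + x * T)" unfolding u_def using p by (simp add: field_simps)
    have q: "0 < x * T" using that T by simp
    have e: "(u x)^2 / (1 - u x) = 1 / ((1 + x * T) * (x * T))"
    proof -
      have gen: "(1/y)^2/(z/y) = 1/(y*z)" if "y \<noteq> 0" "z \<noteq> 0" for y z :: real
        using that by (simp add: field_simps power2_eq_square)
      show ?thesis unfolding \<open>1 - u x = x * T / (1 + x * T)\<close> unfolding u_def
        using gen[of "1 + x * T" "x * T"] p q that T by simp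
    qed
    have e2: "T / (1 + x * T) - 1 / x = - (1 / ((1 + x * T) * x))" using p that by (simp add: field_simps)
    have gen3: "T * (- (1 / (y * (x * T)))) = - (1 / (y * x))" if "y \<noteq> 0" for y
      using that \<open>0 < x\<close> T by (simp add: field_simps)
    have e3: "T * (- (1 / ((1 + x * T) * (x * T)))) = - (1 / ((1 + x * T) * x))" using gen3 p by simp
    show ?thesis unfolding e e2 e3 ..
  qed
  have dPv: "(\<Sum>i=1..k. V i * (T / (1 + L i * T) - 1 / L i)) > 0"
  proof -
    have "(\<Sum>i=1..k. V i * (T / (1 + L i * T) - 1 / L i)) =
      v1 * (T / (1 + L i1 * T) - 1 / L i1) + v2 * (T / (1 + L i2 * T) - 1 / L i2) + v3 * (T / (1 + L i3 * T) - 1 / L i3) + v4 * (T / (1 + L i4 * T) - 1 / L i4)"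
      using Vsum[of "{1..k}" "\<lambda>i. T / (1 + L i * T) - 1 / L i", OF _ I] by simp
    also have "\<dots> = T * (v1*(- ((u (L i1))^2/(1-u (L i1))))+v2*(- ((u (L i2))^2/(1-u (L i2))))+v3*(- ((u (L i3))^2/(1-u (L i3))))+v4*(- ((u (L i4))^2/(1-u (L i4)))))"
      unfolding pt[OF xpos(1)] pt[OF xpos(2)] pt[OF xpos(3)] pt[OF xpos(4)] by (simp add: algebra_simps)
    finally show ?thesis using v(3) T by simp
  qed
  obtain d1 where d1: "d1 > 0" "\<forall>h>0. h < d1 \<longrightarrow> W 0 < W (0 + h)" using DERIV_pos_inc_right[OF dW dWv] by blast
  obtain d2 where d2: "d2 > 0" "\<forall>h>0. h < d2 \<longrightarrow> P 0 < P (0 + h)" using DERIV_pos_inc_right[OF dP dPv] by blast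
  define s where "s = min (min d1 d2) (g / Vs) / 2"
  have s0: "0 < s" unfolding s_def using d1 d2 g0 Vs0 by auto
  have sd: "s < d1" "s < d2" unfolding s_def using d1 d2 g0 Vs0 by auto
  have sg: "s * Vs < g"
  proof -
    have "0 < g / Vs" using g0 Vs0 by simp
    moreover have "min (min d1 d2) (g / Vs) \<le> g / Vs" by simp
    moreover have "m/2 < y" if "m \<le> y" "0 < y" for m y :: real using that by linarith
    ultimately have "s < g / Vs" unfolding s_def by blast
    then show ?thesis using Vs0 by (simp add: pos_less_divide_eq)
  qed
  have Wgt: "W 0 < W s" using d1 s0 sd by auto
  have Pgt: "P 0 < P s" using d2 s0 sd by auto
  define L' where "L' i = L i + s * V i" for i
  have sV: "\<bar>s * V i\<bar> < g" for i
  proof -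
    have "\<bar>s * V i\<bar> = s * \<bar>V i\<bar>" using s0 by (simp add: abs_mult)
    also have "\<dots> \<le> s * Vs" using Vb s0 by (intro mult_left_mono) auto
    finally show ?thesis using sg by linarith
  qed
  have A': "t + rho \<le> L' i" if "i \<in> {1..k}" for i
  proof (cases "V i = 0")
    case True then show ?thesis unfolding L'_def using FA that by auto
  next
    case False
    have "g \<le> L i - t - rho" using gi False by auto
    moreover have "- g < s * V i" using sV[of i] by linarith
    ultimately show ?thesis unfolding L'_def by linarith
  qed
  have B': "L' i = L i" if "i \<in> {Suc k..n}" for i unfolding L'_def using Vk[OF that] by simp
  have nn': "\<forall>i\<in>{1..n}. 0 \<le> L' i"
  proof
    fix i assume i: "i \<in> {1..n}"
    show "0 \<le> L' i"
    proof (cases "i \<le> k")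
      case True then have "t + rho \<le> L' i" using A' i by auto
      then show ?thesis using t rho by linarith
    next
      case False then show ?thesis using B' Lnn i by auto
    qed
  qed
  have sumV: "(\<Sum>i=1..n. V i) = 0" using Vsum[of "{1..n}" "\<lambda>i. 1", OF _ In] v(1) by simp
  have sum': "(\<Sum>i=1..n. L' i) = real n"
  proof -
    have "(\<Sum>i=1..n. L' i) = (\<Sum>i=1..n. L i) + s * (\<Sum>i=1..n. V i)"
      unfolding L'_def by (simp add: sum.distrib sum_distrib_left)
    then show ?thesis using sumV L unfolding Lset_def by simp
  qed
  have L'L: "L' \<in> Lset n" unfolding Lset_def using nn' sum' by auto
  have Dw': "D_wf n L' t = D"
  proof -
    have "D_wf n L' t = (1 / real n) * (real k * t + (\<Sum>i=Suc k..n. L' i))"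
      using Dwf_split[OF k(2)] A' B' FB rho by (smt (verit, ccfv_SIG))
    also have "(\<Sum>i=Suc k..n. L' i) = (\<Sum>i=Suc k..n. L i)" using B' by simp
    also have "(1 / real n) * (real k * t + (\<Sum>i=Suc k..n. L i)) = D_wf n L t"
      using Dwf_split[OF k(2)] FA FB rho by (smt (verit, ccfv_SIG))
    finally show ?thesis using Dw by simp
  qed
  have F': "L' \<in> Fset n k D rho \<and> t_wf n L' D = t"
    using Fset_intro[OF L'L k rho t _ _ Dw'] A' B' FB by auto
  have Dr': "D < D_rc n L' T"
  proof -
    have "D_rc n L' T = (1 / real n) * W s" unfolding D_rc_def W_def L'_def by simp
    moreover have "D_rc n L T = (1 / real n) * W 0" unfolding D_rc_def W_def by simp
    moreover have "(1 / real n) * W 0 < (1 / real n) * W s" using Wgt n by (intro mult_strict_left_mono) auto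
    ultimately show ?thesis using Dr by linarith
  qed
  have tA: "\<forall>i\<in>{1..k}. t < L i" using FA rho by force
  have tA': "\<forall>i\<in>{1..k}. t < L' i" using A' rho by force
  have tB: "\<forall>i\<in>{Suc k..n}. 0 \<le> L i \<and> L i \<le> t" using FB rho by force
  have tB': "\<forall>i\<in>{Suc k..n}. 0 \<le> L' i \<and> L' i \<le> t" using tB B' by simp
  note SV1 = struct_val[OF k(2) t T tA tB]
  note SV2 = struct_val[OF k(2) t T tA' tB']
  have P0: "P 0 = (\<Sum>i=1..k. ln (1 + L i * T) - ln (L i))" unfolding P_def by simp
  have Ps: "P s = (\<Sum>i=1..k. ln (1 + L' i * T) - ln (L' i))" unfolding P_def L'_def by simp
  have Bs: "(\<Sum>i=Suc k..n. log 2 (1 + L' i * T)) = (\<Sum>i=Suc k..n. log 2 (1 + L i * T))" using B' by simp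
  have "R_rc n L T - R_wf n L t < R_rc n L' T - R_wf n L' t"
  proof -
    have "(P 0 + real k * ln t) / ln 2 < (P s + real k * ln t) / ln 2"
      using Pgt by (intro divide_strict_right_mono) auto
    then have "(P 0 + real k * ln t) / ln 2 + (\<Sum>i=Suc k..n. log 2 (1 + L i * T)) <
               (P s + real k * ln t) / ln 2 + (\<Sum>i=Suc k..n. log 2 (1 + L i * T))" by simp
    then show ?thesis unfolding SV1 SV2 P0[symmetric] Ps[symmetric] Bs using n
      by (intro mult_strict_left_mono) auto
  qed
  then show ?thesis using F' Dr' by (intro exI[of _ L']) auto
qed



lemma perturb_B:
  fixes L :: "nat \<Rightarrow> real"
  assumes L: "L \<in> Lset n" and k: "1 \<le> k" "k \<le> n" and rho: "0 < rho" and t: "0 < t" and T: "0 < T"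
    and FA: "\<forall>i\<in>{1..k}. t + rho \<le> L i" and FB: "\<forall>i\<in>{Suc k..n}. 0 \<le> L i \<and> L i \<le> t - rho"
    and Dw: "D_wf n L t = D" and Dr: "D_rc n L T = D"
    and I: "i \<in> {Suc k..n}" "j \<in> {Suc k..n}" and ne: "L i \<noteq> L j"
  shows "\<exists>L'. L' \<in> Fset n k D rho \<and> t_wf n L' D = t \<and> D \<le> D_rc n L' T \<and>
     R_rc n L T - R_wf n L t < R_rc n L' T - R_wf n L' t"
proof -
  have n: "1 \<le> n" using k by auto
  have ij: "i \<noteq> j" using ne by auto
  define m where "m = (L i + L j) / 2"
  define L' where "L' = L(i := m, j := m)"
  have Li: "0 \<le> L i" "L i \<le> t - rho" and Lj: "0 \<le> L j" "L j \<le> t - rho" using FB I by auto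
  have m: "0 \<le> m" "m \<le> t - rho" unfolding m_def using Li Lj by auto
  have In: "i \<in> {1..n}" "j \<in> {1..n}" using I by auto
  have fin: "finite {1..n}" "finite {Suc k..n}" by auto
  have Lnn: "\<forall>x\<in>{1..n}. 0 \<le> L x" using L unfolding Lset_def by auto
  have nn': "\<forall>x\<in>{1..n}. 0 \<le> L' x" unfolding L'_def using Lnn m by auto
  have s': "(\<Sum>x=1..n. L' x) = real n"
  proof -
    have "(\<Sum>x=1..n. L' x) = (\<Sum>x=1..n. L x) - L i - L j + m + m"
      unfolding L'_def using sum_upd2[OF fin(1) In ij, of "\<lambda>x. x" L m m] by simp
    then show ?thesis using L unfolding Lset_def m_def by simp
  qed
  have L'L: "L' \<in> Lset n" unfolding Lset_def using nn' s' by auto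
  have A': "\<forall>x\<in>{1..k}. t + rho \<le> L' x" using FA I unfolding L'_def by auto
  have B': "\<forall>x\<in>{Suc k..n}. 0 \<le> L' x \<and> L' x \<le> t - rho" using FB m unfolding L'_def by auto
  have Bs: "(\<Sum>x=Suc k..n. L' x) = (\<Sum>x=Suc k..n. L x)"
  proof -
    have "(\<Sum>x=Suc k..n. L' x) = (\<Sum>x=Suc k..n. L x) - L i - L j + m + m"
      unfolding L'_def using sum_upd2[OF fin(2) I ij, of "\<lambda>x. x" L m m] by simp
    then show ?thesis unfolding m_def by simp
  qed
  have Dw': "D_wf n L' t = D"
  proof -
    have "D_wf n L' t = (1 / real n) * (real k * t + (\<Sum>i=Suc k..n. L' i))"
      using Dwf_split[OF k(2)] A' B' rho by (smt (verit, ccfv_SIG))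
    also have "\<dots> = (1 / real n) * (real k * t + (\<Sum>i=Suc k..n. L i))" using Bs by simp
    also have "\<dots> = D_wf n L t"
      using Dwf_split[OF k(2)] FA FB rho by (smt (verit, ccfv_SIG))
    finally show ?thesis using Dw by simp
  qed
  have F': "L' \<in> Fset n k D rho \<and> t_wf n L' D = t"
    using Fset_intro[OF L'L k rho t A' B' Dw'] .
  define w where "w x = x / (1 + x * T)" for x
  have Dr': "D \<le> D_rc n L' T"
  proof -
    have "(\<Sum>x=1..n. L' x / (1 + L' x * T)) = (\<Sum>x=1..n. w (L' x))" unfolding w_def by simp
    also have "\<dots> = (\<Sum>x=1..n. w (L x)) - w (L i) - w (L j) + w m + w m"
      unfolding L'_def using sum_upd2[OF fin(1) In ij, of w L m m] by simp
    finally have e: "(\<Sum>x=1..n. L' x / (1 + L' x * T)) = (\<Sum>x=1..n. w (L x)) - w (L i) - w (L j) + w m + w m" .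
    have "w (L i) + w (L j) \<le> w m + w m" unfolding w_def m_def using w_concave[OF Li(1) Lj(1)] T by simp
    then have "(\<Sum>x=1..n. w (L x)) \<le> (\<Sum>x=1..n. L' x / (1 + L' x * T))" using e by linarith
    then have "(1 / real n) * (\<Sum>x=1..n. w (L x)) \<le> (1 / real n) * (\<Sum>x=1..n. L' x / (1 + L' x * T))"
      by (intro mult_left_mono) auto
    then show ?thesis using Dr unfolding D_rc_def w_def by simp
  qed
  define h where "h x = log 2 (1 + x * T)" for x
  have Rr: "R_rc n L T < R_rc n L' T"
  proof -
    have "(\<Sum>x=1..n. log 2 (1 + L' x * T)) = (\<Sum>x=1..n. h (L' x))" unfolding h_def by simp
    also have "\<dots> = (\<Sum>x=1..n. h (L x)) - h (L i) - h (L j) + h m + h m"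
      unfolding L'_def using sum_upd2[OF fin(1) In ij, of h L m m] by simp
    finally have e: "(\<Sum>x=1..n. log 2 (1 + L' x * T)) = (\<Sum>x=1..n. h (L x)) - h (L i) - h (L j) + h m + h m" .
    have "h (L i) + h (L j) < h m + h m" unfolding h_def m_def using log_concave_strict[OF Li(1) Lj(1) T ne] by simp
    then have "(\<Sum>x=1..n. h (L x)) < (\<Sum>x=1..n. log 2 (1 + L' x * T))" using e by linarith
    then have "(1 / (2 * real n)) * (\<Sum>x=1..n. h (L x)) < (1 / (2 * real n)) * (\<Sum>x=1..n. log 2 (1 + L' x * T))"
      using n by (intro mult_strict_left_mono) auto
    then show ?thesis unfolding R_rc_def h_def by simp
  qed
  define q where "q x = max 0 (log 2 (x / t))" for x
  have Rw: "R_wf n L' t = R_wf n L t"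
  proof -
    have "(\<Sum>x=1..n. max 0 (log 2 (L' x / t))) = (\<Sum>x=1..n. q (L' x))" unfolding q_def by simp
    also have "\<dots> = (\<Sum>x=1..n. q (L x)) - q (L i) - q (L j) + q m + q m"
      unfolding L'_def using sum_upd2[OF fin(1) In ij, of q L m m] by simp
    finally have e: "(\<Sum>x=1..n. max 0 (log 2 (L' x / t))) = (\<Sum>x=1..n. q (L x)) - q (L i) - q (L j) + q m + q m" .
    have z: "q (L i) = 0" "q (L j) = 0" "q m = 0" unfolding q_def using Li Lj m t rho
      by (auto intro!: max_log_zero)
    show ?thesis using e z unfolding R_wf_def q_def by simp
  qed
  show ?thesis using F' Dr' Rr Rw by (intro exI[of _ L']) auto
qed

theorem claimD3:
  fixes n k :: nat and Dstar eps rho :: real and lamstar :: "nat \<Rightarrow> real"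
  assumes "1 \<le> n" and "k \<le> n"
    and "0 < Dstar" and "Dstar < 1"
    and "0 < eps" and "eps < Dstar"
    and "rho = eps * (Dstar - eps) / (2 * real n)"
    and "lamstar \<in> Fset n k Dstar rho"
    and "\<forall>lam \<in> Fset n k Dstar rho. Gap n Dstar lam \<le> Gap n Dstar lamstar"
  shows "card (lamstar ` {1..n}) \<le> 5"
proof -
  note n = assms(1) and kn = assms(2) and D = assms(3,4)
  define L where "L = lamstar"
  define t where "t = t_wf n L Dstar"
  define T where "T = T_rc n L Dstar"
  have rho: "0 < rho" using assms(5,6,7,1) by simp
  have Lf: "L \<in> Fset n k Dstar rho" using assms(8) unfolding L_def .
  have LL: "L \<in> Lset n" and FA: "\<forall>i\<in>{1..k}. t + rho \<le> L i"
    and FB: "\<forall>i\<in>{Suc k..n}. 0 \<le> L i \<and> L i \<le> t - rho"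
    using Lf unfolding Fset_def Let_def t_def by auto
  have tp: "0 < t" "t < Max (L ` {1..n})" "D_wf n L t = Dstar" using twf_props[OF LL n D] unfolding t_def by auto
  have Tp: "0 < T" "D_rc n L T = Dstar" using Trc_props[OF LL n D] unfolding T_def by auto
  have k1: "1 \<le> k"
  proof (rule ccontr)
    assume "\<not> 1 \<le> k"
    then have k0: "k = 0" by simp
    obtain j where j: "j \<in> {1..n}" "L j = Max (L ` {1..n})" using Max_attained(1)[OF n] by blast
    have "L j \<le> t - rho" using FB j k0 by auto
    then show False using j tp rho by linarith
  qed
  have GL: "Gap n Dstar L = R_rc n L T - R_wf n L t" unfolding Gap_def RR_rc_def RR_wf_def t_def T_def by simp
  have mx: "\<forall>lam \<in> Fset n k Dstar rho. Gap n Dstar lam \<le> Gap n Dstar L" using assms(9) unfolding L_def .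
  have contra: False if ex: "\<exists>L'. L' \<in> Fset n k Dstar rho \<and> t_wf n L' Dstar = t \<and> Dstar \<le> D_rc n L' T \<and>
     R_rc n L T - R_wf n L t < R_rc n L' T - R_wf n L' t"
  proof -
    obtain L' where L': "L' \<in> Fset n k Dstar rho" "t_wf n L' Dstar = t" "Dstar \<le> D_rc n L' T"
      "R_rc n L T - R_wf n L t < R_rc n L' T - R_wf n L' t" using ex by blast
    have "L' \<in> Lset n" using L'(1) unfolding Fset_def by auto
    then have "R_rc n L' T - R_wf n L' t \<le> Gap n Dstar L'" using Gap_ge[OF _ n D Tp(1) L'(3) L'(2)] by simp
    moreover have "Gap n Dstar L' \<le> Gap n Dstar L" using mx L'(1) by auto
    ultimately show False using GL L'(4) by linarith
  qed
  have Bc: "L i = L j" if "i \<in> {Suc k..n}" "j \<in> {Suc k..n}" for i j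
  proof (rule ccontr)
    assume "L i \<noteq> L j"
    then show False using contra perturb_B[OF LL k1 kn rho tp(1) Tp(1) FA FB tp(3) Tp(2) that] by blast
  qed
  define S where "S = {v \<in> L ` {1..k}. t + rho < v}"
  have finS: "finite S" unfolding S_def by auto
  have Ac: "card S \<le> 3"
  proof (rule ccontr)
    assume "\<not> card S \<le> 3"
    then have "Suc (Suc (Suc (Suc 0))) \<le> card S" by simp
    then obtain a1 a2 a3 a4 where aS: "a1 \<in> S" "a2 \<in> S" "a3 \<in> S" "a4 \<in> S"
      and ad: "a1 \<noteq> a2" "a1 \<noteq> a3" "a1 \<noteq> a4" "a2 \<noteq> a3" "a2 \<noteq> a4" "a3 \<noteq> a4"
      by (rule card_ge4)
    obtain i1 where i1: "i1 \<in> {1..k}" "L i1 = a1" "t + rho < a1" using aS(1) unfolding S_def by auto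
    obtain i2 where i2: "i2 \<in> {1..k}" "L i2 = a2" "t + rho < a2" using aS(2) unfolding S_def by auto
    obtain i3 where i3: "i3 \<in> {1..k}" "L i3 = a3" "t + rho < a3" using aS(3) unfolding S_def by auto
    obtain i4 where i4: "i4 \<in> {1..k}" "L i4 = a4" "t + rho < a4" using aS(4) unfolding S_def by auto
    have "L i1 \<noteq> L i2" "L i1 \<noteq> L i3" "L i1 \<noteq> L i4" "L i2 \<noteq> L i3" "L i2 \<noteq> L i4" "L i3 \<noteq> L i4"
      using i1 i2 i3 i4 ad by simp_all
    then show False using contra perturb_A[OF LL k1 kn rho tp(1) Tp(1) FA FB tp(3) Tp(2) i1(1) i2(1) i3(1) i4(1)]
      i1(2,3) i2(2,3) i3(2,3) i4(2,3) by simp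
  qed
  have "{1..n} = {1..k} \<union> {Suc k..n}" using kn by auto
  then have split: "L ` {1..n} = L ` {1..k} \<union> L ` {Suc k..n}" by (simp add: image_Un)
  have c1: "card (L ` {1..k}) \<le> 4"
  proof -
    have "L ` {1..k} \<subseteq> insert (t + rho) S" unfolding S_def using FA by force
    then have "card (L ` {1..k}) \<le> card (insert (t + rho) S)" using finS by (intro card_mono) auto
    also have "\<dots> \<le> Suc (card S)" using finS by (simp add: card_insert_if)
    finally show ?thesis using Ac by simp
  qed
  have c2: "card (L ` {Suc k..n}) \<le> 1"
  proof (cases "k < n")
    case True
    then have nn: "n \<in> {Suc k..n}" by auto
    have "L ` {Suc k..n} \<subseteq> {L n}" using Bc[OF _ nn] by blast
    then show ?thesis using card_mono[of "{L n}" "L ` {Suc k..n}"] by simp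
  next
    case False
    then have "{Suc k..n} = {}" by auto
    then show ?thesis by simp
  qed
  have "card (L ` {1..n}) \<le> card (L ` {1..k}) + card (L ` {Suc k..n})"
    unfolding split by (rule card_Un_le)
  then show ?thesis using c1 c2 unfolding L_def by simp
qed

end
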